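(* Let $(\mathfrak g_0,\mathfrak q)$ be a parabolic $CR$ algebra and $(\vartheta,\mathfrak h_0)$ an adapted Cartan pair, with root system $\mathcal R$ and parabolic set $\mathcal Q$ of $\mathfrak q$. For a fit Weyl chamber $C$, with order $\prec$, basis $\mathcal B$ and $\Phi=\mathcal Q^n\cap\mathcal B$, the following two conditions are equivalent: (a) if $\alpha\in\mathcal R_{\rm cpx}$, $\alpha\succ0$ and $\bar\alpha\prec0$, then $\alpha$ and $-\bar\alpha$ both belong to $\mathcal Q^n$; (b) $\bar\alpha\succ0$ for all $\alpha\in\mathcal B\setminus(\Phi\cup\mathcal R_{\rm im})$. Likewise the following are equivalent: (c) if $\alpha\in\mathcal R_{\rm cpx}$, $\alpha\succ0$ and $\bar\alpha\succ0$, then $\alpha$ and $\bar\alpha$ both belong to $\mathcal Q^n$; (d) $\bar\alpha\prec0$ for all $\alpha\in\mathcal B\setminus(\Phi\cup\mathcal R_{\rm re})$. Moreover there exists a fit Weyl chamber $C'$ satisfying (a) and (b), and there exists a fit Weyl chamber $C''$ satisfying (c) and (d).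
   Context: $\mathfrak g_0$ is a real semisimple Lie algebra with complexification $\mathfrak g$; $Z\mapsto\bar Z$ conjugation w.r.t. $\mathfrak g_0$; $\mathfrak q$ a complex parabolic subalgebra of $\mathfrak g$. An adapted Cartan pair is a Cartan involution $\vartheta$ of $\mathfrak g_0$ with a $\vartheta$-invariant Cartan subalgebra $\mathfrak h_0$ of $\mathfrak g_0$ contained in $\mathfrak q\cap\mathfrak g_0$. $\mathcal R$ is the root system of $\mathfrak g$ w.r.t. $\mathfrak h=\mathfrak h_0^{\mathbb C}$ (real on $\mathfrak h_{\mathbb R}=(\mathfrak h_0\cap\mathfrak p_0)\oplus i(\mathfrak h_0\cap\mathfrak k_0)$); $\bar\alpha$ is the root with $\mathfrak g^{\bar\alpha}=\overline{\mathfrak g^\alpha}$; $\mathcal R_{\rm re}=\{\bar\alpha=\alpha\}$, $\mathcal R_{\rm im}=\{\bar\alpha=-\alpha\}$, $\mathcal R_{\rm cpx}=\{\bar\alpha\neq\pm\alpha\}$. $\mathcal Q=\{\alpha:\mathfrak g^\alpha\subset\mathfrak q\}$, and $\mathcal Q^n=\{\alpha\in\mathcal Q: -\alpha\notin\mathcal Q\}$ (roots of the nilradical). A Weyl chamber $C$ (with induced order $\prec$ and basis $\mathcal B$ of simple positive roots) is fit for $\mathcal Q$ if every $C$-positive root lies in $\mathcal Q$. *)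

theory Defs
  imports "HOL-Analysis.Analysis"
begin

text \<open>Roots are identified with vectors of the Euclidean space h_R (via the Killing form),
the pairing of a root with an element of h_R is the inner product.\<close>

definition root_system :: "'a::euclidean_space set \<Rightarrow> bool" where
  "root_system R \<longleftrightarrow> finite R \<and> 0 \<notin> R \<and> span R = UNIV \<and>
     (\<forall>\<alpha>\<in>R. \<forall>\<beta>\<in>R. (2 * inner \<beta> \<alpha> / inner \<alpha> \<alpha>) \<in> \<int> \<and>
                      \<beta> - (2 * inner \<beta> \<alpha> / inner \<alpha> \<alpha>) *\<^sub>R \<alpha> \<in> R) \<and>
     (\<forall>\<alpha>\<in>R. \<forall>c::real. c *\<^sub>R \<alpha> \<in> R \<longrightarrow> c = 1 \<or> c = -1)"

text \<open>The map alpha to conj-alpha induced by the conjugation of g w.r.t. g_0: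
 a linear, isometric involution permuting the roots.\<close>
definition root_conjugation :: "'a::euclidean_space set \<Rightarrow> ('a \<Rightarrow> 'a) \<Rightarrow> bool" where
  "root_conjugation R \<sigma> \<longleftrightarrow> linear \<sigma> \<and> (\<forall>x. \<sigma> (\<sigma> x) = x) \<and>
     (\<forall>x y. inner (\<sigma> x) (\<sigma> y) = inner x y) \<and> \<sigma> ` R = R"

definition real_roots :: "'a::euclidean_space set \<Rightarrow> ('a \<Rightarrow> 'a) \<Rightarrow> 'a set" where
  "real_roots R \<sigma> = {\<alpha>\<in>R. \<sigma> \<alpha> = \<alpha>}"

definition imag_roots :: "'a::euclidean_space set \<Rightarrow> ('a \<Rightarrow> 'a) \<Rightarrow> 'a set" where
  "imag_roots R \<sigma> = {\<alpha>\<in>R. \<sigma> \<alpha> = - \<alpha>}"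

definition cpx_roots :: "'a::euclidean_space set \<Rightarrow> ('a \<Rightarrow> 'a) \<Rightarrow> 'a set" where
  "cpx_roots R \<sigma> = {\<alpha>\<in>R. \<sigma> \<alpha> \<noteq> \<alpha> \<and> \<sigma> \<alpha> \<noteq> - \<alpha>}"

definition weyl_chamber :: "'a::euclidean_space set \<Rightarrow> 'a set \<Rightarrow> bool" where
  "weyl_chamber R C \<longleftrightarrow> C \<in> components {x. \<forall>\<alpha>\<in>R. inner \<alpha> x \<noteq> 0}"

definition cpos :: "'a::euclidean_space set \<Rightarrow> 'a \<Rightarrow> bool" where
  "cpos C \<alpha> \<longleftrightarrow> (\<forall>x\<in>C. 0 < inner \<alpha> x)"

definition simple_roots :: "'a::euclidean_space set \<Rightarrow> 'a set \<Rightarrow> 'a set" where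
  "simple_roots R C = {\<alpha>\<in>R. cpos C \<alpha> \<and>
      \<not> (\<exists>\<beta>\<in>R. \<exists>\<gamma>\<in>R. cpos C \<beta> \<and> cpos C \<gamma> \<and> \<alpha> = \<beta> + \<gamma>)}"

text \<open>Parabolic set of roots of a parabolic subalgebra q containing h:
 closed under addition (q is a subalgebra) and containing all positive roots
 of some Weyl chamber (q contains a Borel subalgebra).\<close>
definition parabolic_set :: "'a::euclidean_space set \<Rightarrow> 'a set \<Rightarrow> bool" where
  "parabolic_set R Q \<longleftrightarrow> Q \<subseteq> R \<and>
     (\<forall>\<alpha>\<in>Q. \<forall>\<beta>\<in>Q. \<alpha> + \<beta> \<in> R \<longrightarrow> \<alpha> + \<beta> \<in> Q) \<and>
     (\<exists>C. weyl_chamber R C \<and> {\<alpha>\<in>R. cpos C \<alpha>} \<subseteq> Q)"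

definition nilrad_roots :: "'a::euclidean_space set \<Rightarrow> 'a set" where
  "nilrad_roots Q = {\<alpha>\<in>Q. - \<alpha> \<notin> Q}"

definition fit :: "'a::euclidean_space set \<Rightarrow> 'a set \<Rightarrow> 'a set \<Rightarrow> bool" where
  "fit R Q C \<longleftrightarrow> weyl_chamber R C \<and> (\<forall>\<alpha>\<in>R. cpos C \<alpha> \<longrightarrow> \<alpha> \<in> Q)"

definition cond_a where
  "cond_a R \<sigma> Q C \<longleftrightarrow> (\<forall>\<alpha>\<in>cpx_roots R \<sigma>. cpos C \<alpha> \<and> cpos C (- \<sigma> \<alpha>) \<longrightarrow>
      \<alpha> \<in> nilrad_roots Q \<and> - \<sigma> \<alpha> \<in> nilrad_roots Q)"

definition cond_b where
  "cond_b R \<sigma> Q C \<longleftrightarrow> (\<forall>\<alpha>\<in>simple_roots R C -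
      ((nilrad_roots Q \<inter> simple_roots R C) \<union> imag_roots R \<sigma>). cpos C (\<sigma> \<alpha>))"

definition cond_c where
  "cond_c R \<sigma> Q C \<longleftrightarrow> (\<forall>\<alpha>\<in>cpx_roots R \<sigma>. cpos C \<alpha> \<and> cpos C (\<sigma> \<alpha>) \<longrightarrow>
      \<alpha> \<in> nilrad_roots Q \<and> \<sigma> \<alpha> \<in> nilrad_roots Q)"

definition cond_d where
  "cond_d R \<sigma> Q C \<longleftrightarrow> (\<forall>\<alpha>\<in>simple_roots R C -
      ((nilrad_roots Q \<inter> simple_roots R C) \<union> real_roots R \<sigma>). cpos C (- \<sigma> \<alpha>))"

end

theory Submission
  imports Defs
begin

lemma rs_finite: "root_system R \<Longrightarrow> finite R"
  by (simp add: root_system_def)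

lemma rs_nz: "root_system R \<Longrightarrow> \<alpha> \<in> R \<Longrightarrow> \<alpha> \<noteq> 0"
  by (auto simp: root_system_def)

lemma rs_refl:
  assumes "root_system R" "\<alpha> \<in> R" "\<beta> \<in> R"
  shows "(2 * inner \<beta> \<alpha> / inner \<alpha> \<alpha>) \<in> \<int>"
    "\<beta> - (2 * inner \<beta> \<alpha> / inner \<alpha> \<alpha>) *\<^sub>R \<alpha> \<in> R"
  using assms by (auto simp: root_system_def)

lemma rs_neg:
  assumes "root_system R" "\<alpha> \<in> R" shows "- \<alpha> \<in> R"
proof -
  have nz: "inner \<alpha> \<alpha> \<noteq> 0" using rs_nz[OF assms] by simp
  have "\<alpha> - (2 * inner \<alpha> \<alpha> / inner \<alpha> \<alpha>) *\<^sub>R \<alpha> \<in> R" using rs_refl[OF assms assms(2)] by simp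
  moreover have "\<alpha> - (2 * inner \<alpha> \<alpha> / inner \<alpha> \<alpha>) *\<^sub>R \<alpha> = - \<alpha>" using nz
    by (simp add: scaleR_2)
  ultimately show ?thesis by simp
qed

lemma rs_L1:
  assumes rs: "root_system R" and a: "\<alpha> \<in> R" and b: "\<beta> \<in> R" and ne: "\<alpha> \<noteq> \<beta>"
    and ip: "inner \<alpha> \<beta> > 0"
  shows "\<alpha> - \<beta> \<in> R"
proof -
  have na: "\<alpha> \<noteq> 0" and nb: "\<beta> \<noteq> 0" using rs_nz[OF rs] a b by auto
  have aa: "inner \<alpha> \<alpha> > 0" and bb: "inner \<beta> \<beta> > 0" using na nb by auto
  define n1 where "n1 = 2 * inner \<alpha> \<beta> / inner \<beta> \<beta>"
  define n2 where "n2 = 2 * inner \<beta> \<alpha> / inner \<alpha> \<alpha>"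
  have n1Z: "n1 \<in> \<int>" and r1: "\<alpha> - n1 *\<^sub>R \<beta> \<in> R" using rs_refl[OF rs b a] by (auto simp: n1_def)
  have n2Z: "n2 \<in> \<int>" and r2: "\<beta> - n2 *\<^sub>R \<alpha> \<in> R" using rs_refl[OF rs a b] by (auto simp: n2_def)
  have cs: "inner \<alpha> \<beta> < norm \<alpha> * norm \<beta>"
  proof -
    have le: "inner \<alpha> \<beta> \<le> norm \<alpha> * norm \<beta>" by (simp add: norm_cauchy_schwarz)
    have "inner \<alpha> \<beta> \<noteq> norm \<alpha> * norm \<beta>"
    proof
      assume "inner \<alpha> \<beta> = norm \<alpha> * norm \<beta>"
      then have e: "norm \<alpha> *\<^sub>R \<beta> = norm \<beta> *\<^sub>R \<alpha>" using norm_cauchy_schwarz_eq by blast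
      have "\<beta> = (norm \<beta> / norm \<alpha>) *\<^sub>R \<alpha>" using e na
        by (metis divide_inverse_commute norm_eq_zero scaleR_scaleR inverse_eq_divide
              real_vector.scale_left_imp_eq scaleR_one right_inverse)
      then have "(norm \<beta> / norm \<alpha>) *\<^sub>R \<alpha> \<in> R" using b by simp
      moreover have "\<forall>c. c *\<^sub>R \<alpha> \<in> R \<longrightarrow> c = 1 \<or> c = -1" using rs a by (simp add: root_system_def)
      ultimately have "norm \<beta> / norm \<alpha> = 1 \<or> norm \<beta> / norm \<alpha> = -1" by blast
      moreover have "norm \<beta> / norm \<alpha> > 0" using na nb by simp
      ultimately have "norm \<beta> / norm \<alpha> = 1" by linarith
      with \<open>\<beta> = _\<close> ne show False by simp
    qed
    with le show ?thesis by simp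
  qed
  have "(inner \<alpha> \<beta>)^2 < (norm \<alpha> * norm \<beta>)^2"
    using cs ip by (intro power_strict_mono) auto
  also have "\<dots> = inner \<alpha> \<alpha> * inner \<beta> \<beta>"
    by (simp add: power_mult_distrib power2_norm_eq_inner)
  finally have lt: "(inner \<alpha> \<beta>)^2 < inner \<alpha> \<alpha> * inner \<beta> \<beta>" .
  have prod: "n1 * n2 < 4"
  proof -
    have "n1 * n2 = 4 * (inner \<alpha> \<beta>)^2 / (inner \<alpha> \<alpha> * inner \<beta> \<beta>)"
      using aa bb by (simp add: n1_def n2_def inner_commute power2_eq_square field_simps)
    also have "\<dots> < 4" using lt aa bb by (simp add: field_simps)
    finally show ?thesis .
  qed
  have p1: "n1 > 0" and p2: "n2 > 0" using ip aa bb by (auto simp: n1_def n2_def inner_commute)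
  obtain k1 where k1: "n1 = of_int k1" using n1Z Ints_cases by blast
  obtain k2 where k2: "n2 = of_int k2" using n2Z Ints_cases by blast
  have g1: "k1 \<ge> 1" and g2: "k2 \<ge> 1" using p1 p2 k1 k2 by auto
  have lt4: "k1 * k2 < 4"
  proof -
    have "real_of_int (k1 * k2) < real_of_int 4" using prod k1 k2 by simp
    then show ?thesis by (simp only: of_int_less_iff)
  qed
  have "k1 = 1 \<or> k2 = 1"
  proof (rule ccontr)
    assume h: "\<not> (k1 = 1 \<or> k2 = 1)"
    with g1 g2 have a1: "k1 \<ge> 2" and a2: "k2 \<ge> 2" by linarith+
    have "2 * 2 \<le> k1 * k2" by (rule mult_mono) (use a1 a2 in linarith)+
    then show False using lt4 by linarith
  qed
  then show ?thesis
  proof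
    assume "k1 = 1" then have "n1 = 1" using k1 by simp
    then show ?thesis using r1 by simp
  next
    assume "k2 = 1" then have "n2 = 1" using k2 by simp
    then have "\<beta> - \<alpha> \<in> R" using r2 by simp
    from rs_neg[OF rs this] show ?thesis by simp
  qed
qed

locale chpt =
  fixes R :: "'a::euclidean_space set" and x :: 'a
  assumes rs: "root_system R" and reg: "\<And>\<alpha>. \<alpha> \<in> R \<Longrightarrow> inner \<alpha> x \<noteq> 0"
begin

definition pos :: "'a \<Rightarrow> bool" where "pos \<alpha> \<longleftrightarrow> 0 < inner \<alpha> x"

definition B :: "'a set" where
  "B = {\<alpha>\<in>R. pos \<alpha> \<and> \<not> (\<exists>\<beta>\<in>R. \<exists>\<gamma>\<in>R. pos \<beta> \<and> pos \<gamma> \<and> \<alpha> = \<beta> + \<gamma>)}"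

lemma fin: "finite R" using rs by (simp add: root_system_def)

lemma negR: "\<alpha> \<in> R \<Longrightarrow> - \<alpha> \<in> R" using rs_neg[OF rs] .

lemma pos_or_neg: "\<alpha> \<in> R \<Longrightarrow> pos \<alpha> \<or> pos (- \<alpha>)"
  using reg[of \<alpha>] by (auto simp: pos_def)

lemma not_both: "pos \<alpha> \<Longrightarrow> \<not> pos (- \<alpha>)"
  by (auto simp: pos_def)

lemma pos_add: "pos a \<Longrightarrow> pos b \<Longrightarrow> pos (a + b)"
  by (auto simp: pos_def inner_add_left)

lemma B_R: "\<beta> \<in> B \<Longrightarrow> \<beta> \<in> R" and B_pos: "\<beta> \<in> B \<Longrightarrow> pos \<beta>"
  by (auto simp: B_def)

lemma finB: "finite B" using fin by (auto simp: B_def)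

lemma height_induct[consumes 2, case_names simple sum]:
  assumes "\<alpha> \<in> R" "pos \<alpha>"
    and S: "\<And>\<alpha>. \<alpha> \<in> B \<Longrightarrow> P \<alpha>"
    and A: "\<And>\<alpha> \<beta> \<gamma>. \<beta> \<in> R \<Longrightarrow> \<gamma> \<in> R \<Longrightarrow> pos \<beta> \<Longrightarrow> pos \<gamma> \<Longrightarrow> \<alpha> = \<beta> + \<gamma>
        \<Longrightarrow> \<alpha> \<in> R \<Longrightarrow> pos \<alpha> \<Longrightarrow> P \<beta> \<Longrightarrow> P \<gamma> \<Longrightarrow> P \<alpha>"
  shows "P \<alpha>"
  using assms(1,2)
proof (induction "card {\<rho>\<in>R. inner \<rho> x < inner \<alpha> x}" arbitrary: \<alpha> rule: less_induct)
  case (less \<alpha>)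
  show ?case
  proof (cases "\<alpha> \<in> B")
    case True then show ?thesis by (rule S)
  next
    case False
    then obtain \<beta> \<gamma> where bg: "\<beta> \<in> R" "\<gamma> \<in> R" "pos \<beta>" "pos \<gamma>" "\<alpha> = \<beta> + \<gamma>"
      using less.prems by (auto simp: B_def)
    have sm: "card {\<rho>\<in>R. inner \<rho> x < inner \<delta> x} < card {\<rho>\<in>R. inner \<rho> x < inner \<alpha> x}"
      if d: "\<delta> \<in> R" "inner \<delta> x < inner \<alpha> x" for \<delta>
    proof (rule psubset_card_mono)
      show "finite {\<rho>\<in>R. inner \<rho> x < inner \<alpha> x}" using fin by simp
      show "{\<rho>\<in>R. inner \<rho> x < inner \<delta> x} \<subset> {\<rho>\<in>R. inner \<rho> x < inner \<alpha> x}"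
        using d by auto
    qed
    have "inner \<beta> x < inner \<alpha> x" "inner \<gamma> x < inner \<alpha> x"
      using bg by (auto simp: pos_def inner_add_left)
    then have "P \<beta>" "P \<gamma>" using less.hyps sm bg by auto
    then show ?thesis using A bg less.prems by blast
  qed
qed

lemma B_obtuse:
  assumes "\<beta> \<in> B" "\<gamma> \<in> B" "\<beta> \<noteq> \<gamma>" shows "inner \<beta> \<gamma> \<le> 0"
proof (rule ccontr)
  assume "\<not> inner \<beta> \<gamma> \<le> 0"
  then have d: "\<beta> - \<gamma> \<in> R" using rs_L1[OF rs B_R[OF assms(1)] B_R[OF assms(2)] assms(3)] by simp
  have "pos (\<beta> - \<gamma>) \<or> pos (- (\<beta> - \<gamma>))" using pos_or_neg[OF d] .
  then show False
  proof
    assume "pos (\<beta> - \<gamma>)"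
    then have "\<beta> = (\<beta> - \<gamma>) + \<gamma> \<and> \<beta> - \<gamma> \<in> R \<and> \<gamma> \<in> R \<and> pos \<gamma>"
      using d B_R[OF assms(2)] B_pos[OF assms(2)] by simp
    then show False using assms(1) \<open>pos (\<beta> - \<gamma>)\<close> unfolding B_def by blast
  next
    assume p: "pos (- (\<beta> - \<gamma>))"
    have "\<gamma> = (- (\<beta> - \<gamma>)) + \<beta> \<and> - (\<beta> - \<gamma>) \<in> R \<and> \<beta> \<in> R \<and> pos \<beta>"
      using negR[OF d] B_R[OF assms(1)] B_pos[OF assms(1)] by simp
    then show False using assms(2) p unfolding B_def by blast
  qed
qed

lemma B_indep: "independent B"
proof (rule independent_if_scalars_zero[OF finB])
  fix c :: "'a \<Rightarrow> real" and w
  assume s0: "(\<Sum>v\<in>B. c v *\<^sub>R v) = 0" and w: "w \<in> B"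
  define P where "P = {v\<in>B. c v > 0}"
  define N where "N = {v\<in>B. c v < 0}"
  define Z where "Z = {v\<in>B. c v = 0}"
  have fP: "finite P" and fN: "finite N" and fZ: "finite Z" using finB by (auto simp: P_def N_def Z_def)
  define a where "a = (\<Sum>v\<in>P. c v *\<^sub>R v)"
  define b where "b = (\<Sum>v\<in>N. (- c v) *\<^sub>R v)"
  have Bsplit: "B = P \<union> (N \<union> Z)" by (auto simp: P_def N_def Z_def)
  have "(\<Sum>v\<in>B. c v *\<^sub>R v) = (\<Sum>v\<in>P. c v *\<^sub>R v) + ((\<Sum>v\<in>N. c v *\<^sub>R v) + (\<Sum>v\<in>Z. c v *\<^sub>R v))"
    unfolding Bsplit
    by (subst sum.union_disjoint, use fP fN fZ in \<open>auto simp: P_def N_def Z_def\<close>)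
       (subst sum.union_disjoint, auto simp: P_def N_def Z_def fN fZ)
  also have "(\<Sum>v\<in>Z. c v *\<^sub>R v) = 0" by (simp add: Z_def)
  also have "(\<Sum>v\<in>N. c v *\<^sub>R v) = - b" by (simp add: b_def sum_negf)
  finally have "a - b = 0" using s0 by (simp add: a_def)
  then have ab: "a = b" by simp
  have "inner a a = inner a b" using ab by simp
  also have "\<dots> = (\<Sum>v\<in>P. inner (c v *\<^sub>R v) b)" by (simp add: a_def inner_sum_left)
  also have "\<dots> = (\<Sum>v\<in>P. \<Sum>u\<in>N. (c v * (- c u)) * inner v u)"
    by (intro sum.cong refl) (simp add: b_def inner_sum_right sum_distrib_left mult.assoc mult.left_commute)
  also have "\<dots> \<le> 0"
  proof (intro sum_nonpos)
    fix v u assume "v \<in> P" "u \<in> N"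
    then have v: "v \<in> B" "c v > 0" and u: "u \<in> B" "c u < 0" by (auto simp: P_def N_def)
    have m1: "c v * (- c u) > 0" using v u by (intro mult_pos_pos) auto
    have "v \<noteq> u" using v u by auto
    then have m2: "inner v u \<le> 0" using B_obtuse v u by blast
    from m1 m2 show "(c v * (- c u)) * inner v u \<le> 0" using mult_nonneg_nonpos[of "c v * (- c u)" "inner v u"] by linarith
  qed
  finally have a0: "a = 0" by (metis inner_gt_zero_iff not_le)
  have Pe: "P = {}"
  proof (rule ccontr)
    assume "P \<noteq> {}"
    then have "0 < (\<Sum>v\<in>P. c v * inner v x)"
      by (intro sum_pos fP) (auto simp: P_def B_def pos_def)
    also have "\<dots> = inner a x" by (simp add: a_def inner_sum_left)
    finally show False using a0 by simp
  qed
  have Ne: "N = {}"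
  proof (rule ccontr)
    assume "N \<noteq> {}"
    then have "0 < (\<Sum>v\<in>N. (- c v) * inner v x)"
      by (intro sum_pos fN) (auto simp: N_def B_def pos_def mult_neg_pos)
    also have "\<dots> = inner b x" by (simp add: b_def inner_sum_left)
    finally show False using a0 ab by simp
  qed
  show "c w = 0" using w Pe Ne unfolding P_def N_def by (metis (mono_tags, lifting) empty_Collect_eq linorder_neqE_linordered_idom)
qed

lemma functional:
  fixes f :: "'a \<Rightarrow> real"
  shows "\<exists>h. \<forall>v\<in>B. inner v h = f v"
proof -
  obtain g where g: "linear g" "\<forall>v\<in>B. g v = f v"
    using linear_independent_extend[OF B_indep] by blast
  define h where "h = (\<Sum>b\<in>Basis. g b *\<^sub>R b)"
  have "inner y h = g y" for y
  proof -
    have "g y = g (\<Sum>b\<in>Basis. inner y b *\<^sub>R b)" by (simp add: euclidean_representation)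
    also have "\<dots> = (\<Sum>b\<in>Basis. inner y b * g b)"
      by (simp add: linear_sum[OF g(1)] linear_cmul[OF g(1)])
    also have "\<dots> = inner y h" by (simp add: h_def inner_sum_right mult.commute)
    finally show ?thesis by simp
  qed
  then show ?thesis using g by (intro exI[of _ h]) auto
qed


lemma levi_h:
  assumes cl: "\<forall>\<alpha>\<in>Q. \<forall>\<beta>\<in>Q. \<alpha> + \<beta> \<in> R \<longrightarrow> \<alpha> + \<beta> \<in> Q"
    and fitQ: "\<forall>\<alpha>\<in>R. pos \<alpha> \<longrightarrow> \<alpha> \<in> Q"
  shows "\<exists>h. \<forall>\<alpha>\<in>R. \<alpha> \<in> Q \<longleftrightarrow> 0 \<le> inner \<alpha> h"
proof -
  obtain h where h: "\<forall>v\<in>B. inner v h = (if - v \<in> Q then 0 else 1)"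
    using functional[of "\<lambda>v. if - v \<in> Q then 0 else 1"] by blast
  have F1: "0 \<le> inner \<alpha> h" if "\<alpha> \<in> R" "pos \<alpha>" for \<alpha>
    using that
  proof (induction rule: height_induct)
    case (simple \<alpha>) then show ?case using h by auto
  next
    case (sum \<alpha> \<beta> \<gamma>) then show ?case by (simp add: inner_add_left)
  qed
  have sub: "- \<beta> \<in> Q" if "- (\<beta> + \<gamma>) \<in> Q" "\<beta> \<in> R" "\<gamma> \<in> R" "pos \<gamma>" for \<beta> \<gamma>
  proof -
    have "- (\<beta> + \<gamma>) + \<gamma> = - \<beta>" by simp
    moreover have "\<gamma> \<in> Q" using fitQ that by auto
    ultimately show ?thesis using cl that negR[of \<beta>] by metis
  qed
  have F2a: "- \<alpha> \<in> Q \<longrightarrow> inner \<alpha> h = 0" if "\<alpha> \<in> R" "pos \<alpha>" for \<alpha>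
    using that
  proof (induction rule: height_induct)
    case (simple \<alpha>) then show ?case using h by auto
  next
    case (sum \<alpha> \<beta> \<gamma>)
    show ?case
    proof
      assume a: "- \<alpha> \<in> Q"
      have "- \<beta> \<in> Q" using sub[of \<beta> \<gamma>] a sum by simp
      moreover have "- \<gamma> \<in> Q" using sub[of \<gamma> \<beta>] a sum by (simp add: add.commute)
      ultimately show "inner \<alpha> h = 0" using sum by (simp add: inner_add_left)
    qed
  qed
  have F2b: "inner \<alpha> h = 0 \<longrightarrow> - \<alpha> \<in> Q" if "\<alpha> \<in> R" "pos \<alpha>" for \<alpha>
    using that
  proof (induction rule: height_induct)
    case (simple \<alpha>) then show ?case using h by (auto split: if_splits)
  next
    case (sum \<alpha> \<beta> \<gamma>)
    show ?case
    proof
      assume a: "inner \<alpha> h = 0"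
      have "0 \<le> inner \<beta> h" "0 \<le> inner \<gamma> h" using F1 sum by auto
      then have "inner \<beta> h = 0" "inner \<gamma> h = 0" using a sum by (auto simp: inner_add_left)
      then have "- \<beta> \<in> Q" "- \<gamma> \<in> Q" using sum by auto
      moreover have "- \<beta> + - \<gamma> \<in> R" using negR[of \<alpha>] sum by (simp add: add.commute)
      ultimately have "- \<beta> + - \<gamma> \<in> Q" using cl by blast
      then show "- \<alpha> \<in> Q" using sum by (simp add: add.commute)
    qed
  qed
  show ?thesis
  proof (intro exI ballI)
    fix \<alpha> assume a: "\<alpha> \<in> R"
    show "\<alpha> \<in> Q \<longleftrightarrow> 0 \<le> inner \<alpha> h"
    proof (cases "pos \<alpha>")
      case True then show ?thesis using fitQ F1 a by auto
    next
      case False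
      then have p: "pos (- \<alpha>)" and na: "- \<alpha> \<in> R" using pos_or_neg[OF a] negR[OF a] by auto
      have "0 \<le> inner (- \<alpha>) h" using F1[OF na p] .
      then show ?thesis using F2a[OF na p] F2b[OF na p] by (auto simp: inner_minus_left)
    qed
  qed
qed

lemma ba:
  assumes lin: "linear \<sigma>" and inv: "\<And>v. \<sigma> (\<sigma> v) = v" and img: "\<sigma> ` R = R"
    and cl: "\<forall>\<alpha>\<in>Q. \<forall>\<beta>\<in>Q. \<alpha> + \<beta> \<in> R \<longrightarrow> \<alpha> + \<beta> \<in> Q"
    and fitQ: "\<forall>\<alpha>\<in>R. pos \<alpha> \<longrightarrow> \<alpha> \<in> Q"
    and bb: "\<forall>\<beta>\<in>B. - \<beta> \<in> Q \<longrightarrow> \<sigma> \<beta> \<noteq> - \<beta> \<longrightarrow> pos (\<sigma> \<beta>)"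
    and a: "\<alpha> \<in> R" "\<sigma> \<alpha> \<noteq> - \<alpha>" "pos \<alpha>" "pos (- \<sigma> \<alpha>)"
  shows "- \<alpha> \<notin> Q"
proof
  assume naQ: "- \<alpha> \<in> Q"
  have sR: "\<sigma> v \<in> R" if "v \<in> R" for v using img that by blast
  obtain h where h: "\<forall>v\<in>B. inner v h = (if \<sigma> v = - v then 0 else 1)"
    using functional[of "\<lambda>v. if \<sigma> v = - v then 0 else 1"] by blast
  have G1: "0 \<le> inner \<alpha> h" if "\<alpha> \<in> R" "pos \<alpha>" for \<alpha>
    using that
  proof (induction rule: height_induct)
    case (simple \<alpha>) then show ?case using h by auto
  next
    case (sum \<alpha> \<beta> \<gamma>) then show ?case by (simp add: inner_add_left)
  qed
  have G2: "inner \<alpha> h = 0 \<longrightarrow> \<sigma> \<alpha> = - \<alpha>" if "\<alpha> \<in> R" "pos \<alpha>" for \<alpha>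
    using that
  proof (induction rule: height_induct)
    case (simple \<alpha>) then show ?case using h by (auto split: if_splits)
  next
    case (sum \<alpha> \<beta> \<gamma>)
    show ?case
    proof
      assume z: "inner \<alpha> h = 0"
      have "0 \<le> inner \<beta> h" "0 \<le> inner \<gamma> h" using G1 sum by auto
      then have "inner \<beta> h = 0" "inner \<gamma> h = 0" using z sum by (auto simp: inner_add_left)
      then have "\<sigma> \<beta> = - \<beta>" "\<sigma> \<gamma> = - \<gamma>" using sum by auto
      then show "\<sigma> \<alpha> = - \<alpha>" using sum linear_add[OF lin] by simp
    qed
  qed
  have sub: "- \<beta> \<in> Q" if "- (\<beta> + \<gamma>) \<in> Q" "\<beta> \<in> R" "\<gamma> \<in> R" "pos \<gamma>" for \<beta> \<gamma>
  proof -
    have "- (\<beta> + \<gamma>) + \<gamma> = - \<beta>" by simp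
    moreover have "\<gamma> \<in> Q" using fitQ that by auto
    ultimately show ?thesis using cl that negR[of \<beta>] by metis
  qed
  have G3: "- \<alpha> \<in> Q \<longrightarrow> 0 \<le> inner (\<sigma> \<alpha>) h \<and> (inner (\<sigma> \<alpha>) h = 0 \<longrightarrow> \<sigma> \<alpha> = - \<alpha>)"
    if "\<alpha> \<in> R" "pos \<alpha>" for \<alpha>
    using that
  proof (induction rule: height_induct)
    case (simple \<gamma>)
    show ?case
    proof
      assume q: "- \<gamma> \<in> Q"
      show "0 \<le> inner (\<sigma> \<gamma>) h \<and> (inner (\<sigma> \<gamma>) h = 0 \<longrightarrow> \<sigma> \<gamma> = - \<gamma>)"
      proof (cases "\<sigma> \<gamma> = - \<gamma>")
        case True then show ?thesis using h simple by (simp add: inner_minus_left)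
      next
        case False
        then have p: "pos (\<sigma> \<gamma>)" using bb simple q by blast
        have r: "\<sigma> \<gamma> \<in> R" using sR B_R simple by blast
        have "inner (\<sigma> \<gamma>) h \<noteq> 0"
        proof
          assume "inner (\<sigma> \<gamma>) h = 0"
          then have "\<sigma> (\<sigma> \<gamma>) = - \<sigma> \<gamma>" using G2[OF r p] by simp
          then have "\<gamma> = - \<sigma> \<gamma>" using inv by simp
          then show False using False by (metis minus_minus)
        qed
        then show ?thesis using G1[OF r p] by simp
      qed
    qed
  next
    case (sum \<alpha> \<beta> \<gamma>)
    show ?case
    proof
      assume q: "- \<alpha> \<in> Q"
      have qb: "- \<beta> \<in> Q" using sub[of \<beta> \<gamma>] q sum by simp
      have qg: "- \<gamma> \<in> Q" using sub[of \<gamma> \<beta>] q sum by (simp add: add.commute)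
      have e: "\<sigma> \<alpha> = \<sigma> \<beta> + \<sigma> \<gamma>" using sum linear_add[OF lin] by simp
      have i1: "0 \<le> inner (\<sigma> \<beta>) h" "inner (\<sigma> \<beta>) h = 0 \<longrightarrow> \<sigma> \<beta> = - \<beta>" using sum.IH(1) qb by auto
      have i2: "0 \<le> inner (\<sigma> \<gamma>) h" "inner (\<sigma> \<gamma>) h = 0 \<longrightarrow> \<sigma> \<gamma> = - \<gamma>" using sum.IH(2) qg by auto
      show "0 \<le> inner (\<sigma> \<alpha>) h \<and> (inner (\<sigma> \<alpha>) h = 0 \<longrightarrow> \<sigma> \<alpha> = - \<alpha>)"
      proof
        show "0 \<le> inner (\<sigma> \<alpha>) h" using e i1 i2 by (simp add: inner_add_left)
        show "inner (\<sigma> \<alpha>) h = 0 \<longrightarrow> \<sigma> \<alpha> = - \<alpha>"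
        proof
          assume "inner (\<sigma> \<alpha>) h = 0"
          then have "inner (\<sigma> \<beta>) h = 0" "inner (\<sigma> \<gamma>) h = 0" using e i1 i2 by (auto simp: inner_add_left)
          then show "\<sigma> \<alpha> = - \<alpha>" using e i1 i2 sum by simp
        qed
      qed
    qed
  qed
  have g3: "0 \<le> inner (\<sigma> \<alpha>) h" "inner (\<sigma> \<alpha>) h = 0 \<longrightarrow> \<sigma> \<alpha> = - \<alpha>" using G3[OF a(1) a(3)] naQ by auto
  have "- \<sigma> \<alpha> \<in> R" using negR sR a by blast
  then have "0 \<le> inner (- \<sigma> \<alpha>) h" using G1 a by blast
  then have "inner (\<sigma> \<alpha>) h = 0" using g3 by (simp add: inner_minus_left)
  then show False using g3 a by simp
qed

end

lemma sign_const:
  assumes "connected C" "x \<in> C" "y \<in> C" "\<forall>z\<in>C. inner a z \<noteq> 0"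
  shows "0 < inner a x \<longleftrightarrow> 0 < inner a y"
proof -
  have "\<not> (0 < inner a x \<and> inner a y \<le> 0)"
    using connected_ivt_hyperplane[OF assms(1) assms(3) assms(2), of a 0] assms(4) by force
  moreover have "\<not> (0 < inner a y \<and> inner a x \<le> 0)"
    using connected_ivt_hyperplane[OF assms(1) assms(2) assms(3), of a 0] assms(4) by force
  ultimately show ?thesis using assms(2,4) by force
qed

lemma chamber_pt:
  assumes "weyl_chamber R C"
  shows "\<exists>x. (\<forall>\<alpha>\<in>R. inner \<alpha> x \<noteq> 0) \<and> (\<forall>\<alpha>\<in>R. cpos C \<alpha> \<longleftrightarrow> 0 < inner \<alpha> x)"
proof -
  let ?S = "{x. \<forall>\<alpha>\<in>R. inner \<alpha> x \<noteq> 0}"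
  obtain x where x: "x \<in> ?S" "C = connected_component_set ?S x"
    using assms by (auto simp: weyl_chamber_def components_iff)
  have xC: "x \<in> C" using x by (simp add: connected_component_refl)
  have CS: "C \<subseteq> ?S" using x connected_component_subset by blast
  have cC: "connected C" using x by simp
  have "cpos C \<alpha> \<longleftrightarrow> 0 < inner \<alpha> x" if "\<alpha> \<in> R" for \<alpha>
    using sign_const[OF cC xC, of _ \<alpha>] CS that xC unfolding cpos_def by blast
  then show ?thesis using x by blast
qed

lemma chamber_of_pt:
  assumes "\<forall>\<alpha>\<in>R. inner \<alpha> x \<noteq> 0"
  shows "\<exists>C. weyl_chamber R C \<and> (\<forall>\<alpha>\<in>R. cpos C \<alpha> \<longleftrightarrow> 0 < inner \<alpha> x)"
proof -
  let ?S = "{x. \<forall>\<alpha>\<in>R. inner \<alpha> x \<noteq> 0}"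
  define C where "C = connected_component_set ?S x"
  have xS: "x \<in> ?S" using assms by simp
  have wc: "weyl_chamber R C" unfolding weyl_chamber_def C_def using xS by (rule componentsI)
  have xC: "x \<in> C" using xS by (simp add: C_def connected_component_refl)
  have CS: "C \<subseteq> ?S" using connected_component_subset C_def by blast
  have cC: "connected C" by (simp add: C_def)
  have "cpos C \<alpha> \<longleftrightarrow> 0 < inner \<alpha> x" if "\<alpha> \<in> R" for \<alpha>
    using sign_const[OF cC xC, of _ \<alpha>] CS that xC unfolding cpos_def by blast
  then show ?thesis using wc by blast
qed

lemma generic:
  fixes F :: "'a::euclidean_space set"
  assumes "finite F" "0 \<notin> F"
  shows "\<exists>w. \<forall>v\<in>F. inner v w \<noteq> 0"
proof -
  have "negligible (\<Union>v\<in>F. {w. v \<bullet> w = 0})"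
    using assms by (intro negligible_Union) (auto intro!: negligible_hyperplane)
  then have "(\<Union>v\<in>F. {w. v \<bullet> w = 0}) \<noteq> UNIV" by auto
  then show ?thesis by blast
qed

lemma perturb:
  fixes h y :: "'a::euclidean_space"
  assumes "finite R"
  shows "\<exists>t>0. \<forall>\<alpha>\<in>R. (0 < inner \<alpha> h \<longrightarrow> 0 < inner \<alpha> (h + t *\<^sub>R y)) \<and>
                        (inner \<alpha> h < 0 \<longrightarrow> inner \<alpha> (h + t *\<^sub>R y) < 0)"
proof -
  have "\<forall>\<alpha>\<in>R. eventually (\<lambda>t. (0 < inner \<alpha> h \<longrightarrow> 0 < inner \<alpha> (h + t *\<^sub>R y)) \<and>
                        (inner \<alpha> h < 0 \<longrightarrow> inner \<alpha> (h + t *\<^sub>R y) < 0)) (at_right (0::real))"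
  proof
    fix \<alpha> assume "\<alpha> \<in> R"
    have lim: "((\<lambda>t. inner \<alpha> (h + t *\<^sub>R y)) \<longlongrightarrow> inner \<alpha> h) (at_right (0::real))"
    proof -
      have "((\<lambda>t. inner \<alpha> h + t * inner \<alpha> y) \<longlongrightarrow> inner \<alpha> h + 0 * inner \<alpha> y) (at_right (0::real))"
        by (intro tendsto_intros)
      then show ?thesis by (simp add: inner_add_right)
    qed
    show "eventually (\<lambda>t. (0 < inner \<alpha> h \<longrightarrow> 0 < inner \<alpha> (h + t *\<^sub>R y)) \<and>
                        (inner \<alpha> h < 0 \<longrightarrow> inner \<alpha> (h + t *\<^sub>R y) < 0)) (at_right (0::real))"
    proof (cases "0 < inner \<alpha> h")
      case True
      then show ?thesis using order_tendstoD(1)[OF lim True] by (auto elim: eventually_mono)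
    next
      case False
      show ?thesis
      proof (cases "inner \<alpha> h < 0")
        case True
        then show ?thesis using order_tendstoD(2)[OF lim True] False by (auto elim: eventually_mono)
      next
        case False2: False
        show ?thesis using False False2 by simp
      qed
    qed
  qed
  then have "eventually (\<lambda>t. 0 < t \<and> (\<forall>\<alpha>\<in>R. (0 < inner \<alpha> h \<longrightarrow> 0 < inner \<alpha> (h + t *\<^sub>R y)) \<and>
                        (inner \<alpha> h < 0 \<longrightarrow> inner \<alpha> (h + t *\<^sub>R y) < 0))) (at_right (0::real))"
    using assms eventually_at_right_less by (intro eventually_conj eventually_ball_finite) auto
  moreover have "at_right (0::real) \<noteq> bot" by simp
  ultimately show ?thesis
    using eventually_happens' by blast
qed

lemma lex1:
  fixes a b t :: real
  assumes "t > 0" "(0 < a \<longrightarrow> 0 < a + t * b) \<and> (a < 0 \<longrightarrow> a + t * b < 0)" "b \<noteq> 0"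
  shows "(0 < a + t * b \<longleftrightarrow> 0 < a \<or> (a = 0 \<and> 0 < b))"
    "(a + t * b < 0 \<longleftrightarrow> a < 0 \<or> (a = 0 \<and> b < 0))"
    "a + t * b \<noteq> 0"
proof -
  have A1: "0 < a \<Longrightarrow> 0 < a + t * b" and A2: "a < 0 \<Longrightarrow> a + t * b < 0" using assms(2) by auto
  have D: "(0 < b \<and> 0 < t * b) \<or> (b < 0 \<and> t * b < 0)"
    using assms(1,3) by (metis linorder_neqE_linordered_idom mult_pos_neg mult_pos_pos)
  show "(0 < a + t * b \<longleftrightarrow> 0 < a \<or> (a = 0 \<and> 0 < b))" using A1 A2 D by smt
  show "(a + t * b < 0 \<longleftrightarrow> a < 0 \<or> (a = 0 \<and> b < 0))" using A1 A2 D by smt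
  show "a + t * b \<noteq> 0" using A1 A2 D by smt
qed

lemma inner_pert: "inner \<alpha> (h + t *\<^sub>R y) = inner \<alpha> h + t * inner \<alpha> y"
  by (simp add: inner_add_right)

lemma main_ab:
  assumes rs: "root_system R" and rc: "root_conjugation R \<sigma>" and pq: "parabolic_set R Q"
    and ft: "fit R Q C"
  shows "cond_a R \<sigma> Q C \<longleftrightarrow> cond_b R \<sigma> Q C"
proof -
  obtain x where xr: "\<forall>\<alpha>\<in>R. inner \<alpha> x \<noteq> 0" and cp: "\<forall>\<alpha>\<in>R. cpos C \<alpha> \<longleftrightarrow> 0 < inner \<alpha> x"
    using chamber_pt ft unfolding fit_def by blast
  interpret chpt R x using rs xr by unfold_locales auto
  have cpp: "\<And>\<alpha>. \<alpha> \<in> R \<Longrightarrow> cpos C \<alpha> \<longleftrightarrow> pos \<alpha>" using cp pos_def by simp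
  have lin: "linear \<sigma>" and inv: "\<And>v. \<sigma> (\<sigma> v) = v" and img: "\<sigma> ` R = R"
    using rc unfolding root_conjugation_def by auto
  have sR: "\<And>v. v \<in> R \<Longrightarrow> \<sigma> v \<in> R" using img by blast
  have cl: "\<forall>\<alpha>\<in>Q. \<forall>\<beta>\<in>Q. \<alpha> + \<beta> \<in> R \<longrightarrow> \<alpha> + \<beta> \<in> Q" using pq unfolding parabolic_set_def by auto
  have fitQ: "\<forall>\<alpha>\<in>R. pos \<alpha> \<longrightarrow> \<alpha> \<in> Q" using ft cpp unfolding fit_def by auto
  have SB: "simple_roots R C = B" unfolding simple_roots_def B_def using cpp by blast
  show ?thesis
  proof
    assume A: "cond_a R \<sigma> Q C"
    show "cond_b R \<sigma> Q C" unfolding cond_b_def SB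
    proof
      fix \<beta> assume \<beta>: "\<beta> \<in> B - ((nilrad_roots Q \<inter> B) \<union> imag_roots R \<sigma>)"
      have bR: "\<beta> \<in> R" "pos \<beta>" using \<beta> B_R B_pos by auto
      have nn: "\<beta> \<notin> nilrad_roots Q" "\<sigma> \<beta> \<noteq> - \<beta>" using \<beta> bR by (auto simp: imag_roots_def)
      have "pos (\<sigma> \<beta>)"
      proof (rule ccontr)
        assume "\<not> pos (\<sigma> \<beta>)"
        then have np: "pos (- \<sigma> \<beta>)" using pos_or_neg sR bR by blast
        have "\<sigma> \<beta> \<noteq> \<beta>" using np bR not_both by auto
        then have c: "\<beta> \<in> cpx_roots R \<sigma>" using nn bR by (simp add: cpx_roots_def)
        have "cpos C \<beta>" "cpos C (- \<sigma> \<beta>)" using cpp bR np sR negR by auto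
        then have "\<beta> \<in> nilrad_roots Q" using A c unfolding cond_a_def by blast
        then show False using nn by simp
      qed
      then show "cpos C (\<sigma> \<beta>)" using cpp sR bR by simp
    qed
  next
    assume Bc: "cond_b R \<sigma> Q C"
    have bb: "\<forall>\<beta>\<in>B. - \<beta> \<in> Q \<longrightarrow> \<sigma> \<beta> \<noteq> - \<beta> \<longrightarrow> pos (\<sigma> \<beta>)"
    proof (intro ballI impI)
      fix \<beta> assume b: "\<beta> \<in> B" "- \<beta> \<in> Q" "\<sigma> \<beta> \<noteq> - \<beta>"
      then have "\<beta> \<in> B - ((nilrad_roots Q \<inter> B) \<union> imag_roots R \<sigma>)"
        by (auto simp: nilrad_roots_def imag_roots_def)
      then have "cpos C (\<sigma> \<beta>)" using Bc unfolding cond_b_def SB by blast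
      then show "pos (\<sigma> \<beta>)" using cpp sR B_R b by blast
    qed
    have key: "\<And>\<alpha>. \<alpha> \<in> R \<Longrightarrow> \<sigma> \<alpha> \<noteq> - \<alpha> \<Longrightarrow> pos \<alpha> \<Longrightarrow> pos (- \<sigma> \<alpha>) \<Longrightarrow> - \<alpha> \<notin> Q"
      using ba[OF lin inv img cl fitQ bb] by blast
    show "cond_a R \<sigma> Q C" unfolding cond_a_def
    proof (intro ballI impI)
      fix \<alpha> assume a: "\<alpha> \<in> cpx_roots R \<sigma>" "cpos C \<alpha> \<and> cpos C (- \<sigma> \<alpha>)"
      have aR: "\<alpha> \<in> R" "\<sigma> \<alpha> \<noteq> \<alpha>" "\<sigma> \<alpha> \<noteq> - \<alpha>" using a cpx_roots_def by auto
      have nsR: "- \<sigma> \<alpha> \<in> R" using negR sR aR by blast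
      have p: "pos \<alpha>" "pos (- \<sigma> \<alpha>)" using a cpp aR nsR by auto
      have "\<alpha> \<in> nilrad_roots Q" using key[OF aR(1) aR(3) p] fitQ p aR by (simp add: nilrad_roots_def)
      moreover have "- \<sigma> \<alpha> \<in> nilrad_roots Q"
      proof -
        have e: "\<sigma> (- \<sigma> \<alpha>) = - \<alpha>" using linear_neg[OF lin] inv by simp
        have "\<sigma> (- \<sigma> \<alpha>) \<noteq> - (- \<sigma> \<alpha>)" using e aR(3) by (metis minus_minus)
        moreover have "pos (- \<sigma> (- \<sigma> \<alpha>))" using e p by simp
        ultimately have "- (- \<sigma> \<alpha>) \<notin> Q" using key[OF nsR] p by blast
        then show ?thesis using fitQ p nsR by (simp add: nilrad_roots_def)
      qed
      ultimately show "\<alpha> \<in> nilrad_roots Q \<and> - \<sigma> \<alpha> \<in> nilrad_roots Q" by simp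
    qed
  qed
qed

lemma exist_a:
  assumes rs: "root_system R" and rc: "root_conjugation R \<sigma>" and pq: "parabolic_set R Q"
  shows "\<exists>C. fit R Q C \<and> cond_a R \<sigma> Q C"
proof -
  have lin: "linear \<sigma>" and inv: "\<And>v. \<sigma> (\<sigma> v) = v" and img: "\<sigma> ` R = R"
    and iso: "\<And>a b. inner (\<sigma> a) (\<sigma> b) = inner a b"
    using rc unfolding root_conjugation_def by auto
  have sR: "\<And>v. v \<in> R \<Longrightarrow> \<sigma> v \<in> R" using img by blast
  have fin: "finite R" using rs by (simp add: root_system_def)
  have cl: "\<forall>\<alpha>\<in>Q. \<forall>\<beta>\<in>Q. \<alpha> + \<beta> \<in> R \<longrightarrow> \<alpha> + \<beta> \<in> Q" using pq unfolding parabolic_set_def by auto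
  obtain C0 where C0: "weyl_chamber R C0" "{\<alpha>\<in>R. cpos C0 \<alpha>} \<subseteq> Q"
    using pq unfolding parabolic_set_def by auto
  obtain x0 where x0r: "\<forall>\<alpha>\<in>R. inner \<alpha> x0 \<noteq> 0" and cp0: "\<forall>\<alpha>\<in>R. cpos C0 \<alpha> \<longleftrightarrow> 0 < inner \<alpha> x0"
    using chamber_pt C0 by blast
  interpret c0: chpt R x0 using rs x0r by unfold_locales auto
  have fitQ0: "\<forall>\<alpha>\<in>R. c0.pos \<alpha> \<longrightarrow> \<alpha> \<in> Q" using C0 cp0 c0.pos_def by auto
  obtain h0 where h0: "\<forall>\<alpha>\<in>R. \<alpha> \<in> Q \<longleftrightarrow> 0 \<le> inner \<alpha> h0"
    using c0.levi_h[OF cl fitQ0] by blast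
  define F where "F = (R \<union> (\<lambda>\<alpha>. \<alpha> + \<sigma> \<alpha>) ` R) - {0}"
  have "finite F" using fin by (simp add: F_def)
  then obtain w0 where w0: "\<forall>v\<in>F. inner v w0 \<noteq> 0" using generic[of F] by (auto simp: F_def)
  define u where "u = w0 + \<sigma> w0"
  have u1: "inner (\<sigma> a) u = inner a u" for a
  proof -
    have "inner a (\<sigma> w0) = inner (\<sigma> a) w0" using iso[of a "\<sigma> w0"] inv by simp
    moreover have "inner (\<sigma> a) (\<sigma> w0) = inner a w0" using iso by simp
    ultimately show ?thesis by (simp add: u_def inner_add_right)
  qed
  have u2: "inner \<alpha> u \<noteq> 0" if "\<alpha> \<in> R" "\<alpha> + \<sigma> \<alpha> \<noteq> 0" for \<alpha>
  proof -
    have "\<alpha> + \<sigma> \<alpha> \<in> F" using that by (auto simp: F_def)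
    then have "inner (\<alpha> + \<sigma> \<alpha>) w0 \<noteq> 0" using w0 by blast
    moreover have "inner \<alpha> (\<sigma> w0) = inner (\<sigma> \<alpha>) w0" using iso[of \<alpha> "\<sigma> w0"] inv by simp
    ultimately show ?thesis by (simp add: u_def inner_add_right inner_add_left)
  qed
  have w0r: "inner \<alpha> w0 \<noteq> 0" if "\<alpha> \<in> R" for \<alpha>
    using that w0 rs_nz[OF rs that] by (auto simp: F_def)
  have k2: "inner (\<sigma> a) h0 = inner a (\<sigma> h0)" for a using iso[of "\<sigma> a" h0] inv by simp
  have k2': "inner (\<sigma> a) (\<sigma> h0) = inner a h0" for a using iso by simp
  obtain t3 where t3: "t3 > 0" "\<forall>\<alpha>\<in>R. (0 < inner \<alpha> u \<longrightarrow> 0 < inner \<alpha> (u + t3 *\<^sub>R w0)) \<and>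
                        (inner \<alpha> u < 0 \<longrightarrow> inner \<alpha> (u + t3 *\<^sub>R w0) < 0)"
    using perturb[OF fin] by blast
  define z3 where "z3 = u + t3 *\<^sub>R w0"
  obtain t2 where t2: "t2 > 0" "\<forall>\<alpha>\<in>R. (0 < inner \<alpha> (\<sigma> h0) \<longrightarrow> 0 < inner \<alpha> (\<sigma> h0 + t2 *\<^sub>R z3)) \<and>
                        (inner \<alpha> (\<sigma> h0) < 0 \<longrightarrow> inner \<alpha> (\<sigma> h0 + t2 *\<^sub>R z3) < 0)"
    using perturb[OF fin] by blast
  define z2 where "z2 = \<sigma> h0 + t2 *\<^sub>R z3"
  obtain t1 where t1: "t1 > 0" "\<forall>\<alpha>\<in>R. (0 < inner \<alpha> h0 \<longrightarrow> 0 < inner \<alpha> (h0 + t1 *\<^sub>R z2)) \<and>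
                        (inner \<alpha> h0 < 0 \<longrightarrow> inner \<alpha> (h0 + t1 *\<^sub>R z2) < 0)"
    using perturb[OF fin] by blast
  define x where "x = h0 + t1 *\<^sub>R z2"
  have Z3: "inner \<alpha> z3 \<noteq> 0 \<and> (0 < inner \<alpha> u \<longrightarrow> 0 < inner \<alpha> z3) \<and> (inner \<alpha> u < 0 \<longrightarrow> inner \<alpha> z3 < 0)"
    if "\<alpha> \<in> R" for \<alpha>
    using lex1[OF t3(1), of "inner \<alpha> u" "inner \<alpha> w0"] t3(2) that w0r[OF that]
    unfolding z3_def inner_pert by auto
  have Z2: "inner \<alpha> z2 \<noteq> 0 \<and> (0 < inner \<alpha> z2 \<longleftrightarrow> 0 < inner \<alpha> (\<sigma> h0) \<or> (inner \<alpha> (\<sigma> h0) = 0 \<and> 0 < inner \<alpha> z3))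
      \<and> (inner \<alpha> z2 < 0 \<longleftrightarrow> inner \<alpha> (\<sigma> h0) < 0 \<or> (inner \<alpha> (\<sigma> h0) = 0 \<and> inner \<alpha> z3 < 0))"
    if "\<alpha> \<in> R" for \<alpha>
    using lex1[OF t2(1), of "inner \<alpha> (\<sigma> h0)" "inner \<alpha> z3"] t2(2) that Z3[OF that]
    unfolding z2_def inner_pert by auto
  have X: "inner \<alpha> x \<noteq> 0 \<and> (0 < inner \<alpha> x \<longleftrightarrow> 0 < inner \<alpha> h0 \<or> (inner \<alpha> h0 = 0 \<and> 0 < inner \<alpha> z2))
      \<and> (inner \<alpha> x < 0 \<longleftrightarrow> inner \<alpha> h0 < 0 \<or> (inner \<alpha> h0 = 0 \<and> inner \<alpha> z2 < 0))"
    if "\<alpha> \<in> R" for \<alpha>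
    using lex1[OF t1(1), of "inner \<alpha> h0" "inner \<alpha> z2"] t1(2) that Z2[OF that]
    unfolding x_def inner_pert by auto
  obtain C where C: "weyl_chamber R C" "\<forall>\<alpha>\<in>R. cpos C \<alpha> \<longleftrightarrow> 0 < inner \<alpha> x"
    using chamber_of_pt[of R x] X by blast
  have fitC: "fit R Q C" unfolding fit_def
  proof (intro conjI ballI impI)
    show "weyl_chamber R C" by (rule C(1))
    fix \<alpha> assume a: "\<alpha> \<in> R" "cpos C \<alpha>"
    then have "0 < inner \<alpha> x" using C by blast
    then have "0 \<le> inner \<alpha> h0" using X[OF a(1)] by auto
    then show "\<alpha> \<in> Q" using h0 a by blast
  qed
  have condA: "cond_a R \<sigma> Q C" unfolding cond_a_def
  proof (intro ballI impI)
    fix \<alpha> assume a: "\<alpha> \<in> cpx_roots R \<sigma>" "cpos C \<alpha> \<and> cpos C (- \<sigma> \<alpha>)"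
    have aR: "\<alpha> \<in> R" "\<sigma> \<alpha> \<noteq> \<alpha>" "\<sigma> \<alpha> \<noteq> - \<alpha>" using a cpx_roots_def by auto
    have sa: "\<sigma> \<alpha> \<in> R" using sR aR by blast
    have nsR: "- \<sigma> \<alpha> \<in> R" using rs_neg[OF rs sa] .
    have pa: "0 < inner \<alpha> x" using a C aR by blast
    have ns: "inner (\<sigma> \<alpha>) x < 0" using a C nsR by (auto simp: inner_minus_left)
    have u3: "inner \<alpha> u \<noteq> 0" using u2[OF aR(1)] aR(3) by (metis add.commute add_eq_0_iff)
    have Xa: "0 < inner \<alpha> h0 \<or> (inner \<alpha> h0 = 0 \<and> 0 < inner \<alpha> z2)" using X[OF aR(1)] pa by blast
    have Xs: "inner (\<sigma> \<alpha>) h0 < 0 \<or> (inner (\<sigma> \<alpha>) h0 = 0 \<and> inner (\<sigma> \<alpha>) z2 < 0)" using X[OF sa] ns by blast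
    have Za: "0 < inner \<alpha> z2 \<longleftrightarrow> 0 < inner (\<sigma> \<alpha>) h0 \<or> (inner (\<sigma> \<alpha>) h0 = 0 \<and> 0 < inner \<alpha> z3)"
      using Z2[OF aR(1)] k2[of \<alpha>] by simp
    have Zs: "inner (\<sigma> \<alpha>) z2 < 0 \<longleftrightarrow> inner \<alpha> h0 < 0 \<or> (inner \<alpha> h0 = 0 \<and> inner (\<sigma> \<alpha>) z3 < 0)"
      using Z2[OF sa] k2'[of \<alpha>] by simp
    have z3a: "(0 < inner \<alpha> u \<longrightarrow> 0 < inner \<alpha> z3) \<and> (inner \<alpha> u < 0 \<longrightarrow> inner \<alpha> z3 < 0)" using Z3[OF aR(1)] by blast
    have z3s: "(0 < inner \<alpha> u \<longrightarrow> 0 < inner (\<sigma> \<alpha>) z3) \<and> (inner \<alpha> u < 0 \<longrightarrow> inner (\<sigma> \<alpha>) z3 < 0)"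
      using Z3[OF sa] u1[of \<alpha>] by simp
    have res: "0 < inner \<alpha> h0 \<and> inner (\<sigma> \<alpha>) h0 < 0"
    proof (cases "0 < inner \<alpha> h0")
      case True
      then show ?thesis using Xs Zs by auto
    next
      case False
      then have a0: "inner \<alpha> h0 = 0" "0 < inner \<alpha> z2" using Xa by auto
      then have s0: "inner (\<sigma> \<alpha>) h0 = 0" using Xs Za by auto
      then have "0 < inner \<alpha> z3" using Za a0 by auto
      moreover have "inner (\<sigma> \<alpha>) z3 < 0" using Xs s0 Zs a0 by auto
      ultimately show ?thesis using z3a z3s u3 by (meson linorder_neqE_linordered_idom not_less_iff_gr_or_eq)
    qed
    have "\<alpha> \<in> Q" "- \<alpha> \<notin> Q" using res h0 aR(1) rs_neg[OF rs aR(1)] by (auto simp: inner_minus_left)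
    moreover have "- \<sigma> \<alpha> \<in> Q" "\<sigma> \<alpha> \<notin> Q" using res h0 sa nsR by (auto simp: inner_minus_left)
    ultimately show "\<alpha> \<in> nilrad_roots Q \<and> - \<sigma> \<alpha> \<in> nilrad_roots Q" by (simp add: nilrad_roots_def)
  qed
  show ?thesis using fitC condA by blast
qed

lemma rc_neg:
  assumes rs: "root_system R" and rc: "root_conjugation R \<sigma>"
  shows "root_conjugation R (\<lambda>v. - \<sigma> v)"
proof -
  have lin: "linear \<sigma>" and inv: "\<And>v. \<sigma> (\<sigma> v) = v" and img: "\<sigma> ` R = R"
    and iso: "\<And>a b. inner (\<sigma> a) (\<sigma> b) = inner a b"
    using rc unfolding root_conjugation_def by auto
  have l2: "linear (\<lambda>v. - \<sigma> v)"
    using lin unfolding linear_iff by (simp add: linear_add linear_cmul)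
  have "(\<lambda>v. - \<sigma> v) ` R = R"
  proof
    show "(\<lambda>v. - \<sigma> v) ` R \<subseteq> R" using img rs_neg[OF rs] by blast
    show "R \<subseteq> (\<lambda>v. - \<sigma> v) ` R"
    proof
      fix r assume r: "r \<in> R"
      have "- r \<in> R" using rs_neg[OF rs r] .
      then have "\<sigma> (- r) \<in> R" using img by blast
      moreover have "r = - \<sigma> (\<sigma> (- r))" using inv by simp
      ultimately show "r \<in> (\<lambda>v. - \<sigma> v) ` R" by blast
    qed
  qed
  then show ?thesis using l2 inv iso linear_neg[OF lin] unfolding root_conjugation_def by simp
qed

lemma cd_conv:
  "cond_c R \<sigma> Q C = cond_a R (\<lambda>v. - \<sigma> v) Q C"
  "cond_d R \<sigma> Q C = cond_b R (\<lambda>v. - \<sigma> v) Q C"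
proof -
  have c: "cpx_roots R (\<lambda>v. - \<sigma> v) = cpx_roots R \<sigma>" by (auto simp: cpx_roots_def minus_equation_iff)
  have i: "imag_roots R (\<lambda>v. - \<sigma> v) = real_roots R \<sigma>" by (auto simp: imag_roots_def real_roots_def)
  show "cond_c R \<sigma> Q C = cond_a R (\<lambda>v. - \<sigma> v) Q C"
    unfolding cond_c_def cond_a_def c by simp
  show "cond_d R \<sigma> Q C = cond_b R (\<lambda>v. - \<sigma> v) Q C"
    unfolding cond_d_def cond_b_def i by simp
qed

theorem lemma4p3:
  fixes R Q :: "'a::euclidean_space set" and \<sigma> :: "'a \<Rightarrow> 'a"
  assumes "root_system R" and "root_conjugation R \<sigma>" and "parabolic_set R Q"
  shows "(\<forall>C. fit R Q C \<longrightarrow> (cond_a R \<sigma> Q C \<longleftrightarrow> cond_b R \<sigma> Q C)) \<and>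
         (\<forall>C. fit R Q C \<longrightarrow> (cond_c R \<sigma> Q C \<longleftrightarrow> cond_d R \<sigma> Q C)) \<and>
         (\<exists>C'. fit R Q C' \<and> cond_a R \<sigma> Q C' \<and> cond_b R \<sigma> Q C') \<and>
         (\<exists>C''. fit R Q C'' \<and> cond_c R \<sigma> Q C'' \<and> cond_d R \<sigma> Q C'')"
proof -
  have rc2: "root_conjugation R (\<lambda>v. - \<sigma> v)" using rc_neg assms by blast
  have 1: "\<forall>C. fit R Q C \<longrightarrow> (cond_a R \<sigma> Q C \<longleftrightarrow> cond_b R \<sigma> Q C)"
    using main_ab assms by blast
  have 2: "\<forall>C. fit R Q C \<longrightarrow> (cond_c R \<sigma> Q C \<longleftrightarrow> cond_d R \<sigma> Q C)"
    using main_ab[OF assms(1) rc2 assms(3)] cd_conv by metis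
  obtain C' where C': "fit R Q C'" "cond_a R \<sigma> Q C'" using exist_a assms by blast
  obtain C'' where C'': "fit R Q C''" "cond_a R (\<lambda>v. - \<sigma> v) Q C''"
    using exist_a[OF assms(1) rc2 assms(3)] by blast
  have 3: "\<exists>C'. fit R Q C' \<and> cond_a R \<sigma> Q C' \<and> cond_b R \<sigma> Q C'" using C' 1 by blast
  have 4: "\<exists>C''. fit R Q C'' \<and> cond_c R \<sigma> Q C'' \<and> cond_d R \<sigma> Q C''"
    using C'' 2 cd_conv by metis
  show ?thesis using 1 2 3 4 by blast
qed

end
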